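(* Let $k\ge 2$ and $b>0$. There exists a constant $c>0$ depending only on $k$ and $b$ such that for every finite set $Z$ and every $S\subseteq\{0,1,\dots,k\}^Z$ with $F_S\ge k^{b|Z|}$, there exists $W\subseteq Z$ with $|W|\ge c|Z|$ and $S|_W\supseteq\{1,\dots,k\}^W$.
   Context: For a finite set $Z$, let ${\mathcal U}$ be the cover of $\{0,1,\dots,k\}^Z$ consisting of all sets of the form $\prod_{z\in Z}\{i_z\}^{\rm c}$ (complement taken in $\{0,1,\dots,k\}$) with $1\le i_z\le k$ for each $z\in Z$. For $S\subseteq\{0,1,\dots,k\}^Z$, $F_S$ denotes the minimal number of sets in ${\mathcal U}$ needed to cover $S$. $S|_W$ denotes the set of restrictions to $W$ of the elements of $S$. *)

theory Defs
  imports "HOL-Analysis.Analysis"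
begin

definition cube :: "nat \<Rightarrow> 'a set \<Rightarrow> ('a \<Rightarrow> nat) set" where
  "cube k Z = PiE Z (\<lambda>_. {0..k})"

definition cover_set :: "nat \<Rightarrow> 'a set \<Rightarrow> ('a \<Rightarrow> nat) \<Rightarrow> ('a \<Rightarrow> nat) set" where
  "cover_set k Z i = PiE Z (\<lambda>z. {0..k} - {i z})"

definition cover_U :: "nat \<Rightarrow> 'a set \<Rightarrow> ('a \<Rightarrow> nat) set set" where
  "cover_U k Z = cover_set k Z ` PiE Z (\<lambda>_. {1..k})"

definition F_num :: "nat \<Rightarrow> 'a set \<Rightarrow> ('a \<Rightarrow> nat) set \<Rightarrow> nat" where
  "F_num k Z S = (LEAST n. \<exists>\<V>. \<V> \<subseteq> cover_U k Z \<and> finite \<V> \<and> card \<V> = n \<and> S \<subseteq> \<Union>\<V>)"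

definition restr_set :: "('a \<Rightarrow> nat) set \<Rightarrow> 'a set \<Rightarrow> ('a \<Rightarrow> nat) set" where
  "restr_set S W = (\<lambda>x. restrict x W) ` S"

end

theory Submission
  imports Defs
begin

definition TT :: "nat \<Rightarrow> nat set \<Rightarrow> (nat \<Rightarrow> nat) set \<Rightarrow> nat set set" where
  "TT k Z S = {W. W \<subseteq> Z \<and> PiE W (\<lambda>_. {1..k}) \<subseteq> restr_set S W}"

definition covers :: "nat set \<Rightarrow> (nat \<Rightarrow> nat) set \<Rightarrow> (nat \<Rightarrow> nat) set \<Rightarrow> bool" where
  "covers Z I S \<longleftrightarrow> (\<forall>x\<in>S. \<exists>i\<in>I. \<forall>z\<in>Z. x z \<noteq> i z)"

lemma finite_TT: "finite Z \<Longrightarrow> finite (TT k Z S)"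
  by (rule finite_subset[of _ "Pow Z"]) (auto simp: TT_def)

lemma TT_proj_mono:
  assumes "S0 \<subseteq> S" "Z' \<subseteq> Z"
  shows "TT k Z' ((\<lambda>x. restrict x Z') ` S0) \<subseteq> TT k Z S"
proof
  fix W assume W: "W \<in> TT k Z' ((\<lambda>x. restrict x Z') ` S0)"
  hence WZ: "W \<subseteq> Z'" by (auto simp: TT_def)
  have "restr_set ((\<lambda>x. restrict x Z') ` S0) W \<subseteq> restr_set S W"
  proof
    fix q assume "q \<in> restr_set ((\<lambda>x. restrict x Z') ` S0) W"
    then obtain x where x: "x \<in> S0" "q = restrict (restrict x Z') W"
      by (auto simp: restr_set_def)
    have "restrict (restrict x Z') W = restrict x W" using WZ
      by (auto simp: restrict_def fun_eq_iff)
    thus "q \<in> restr_set S W" using x assms(1) by (auto simp: restr_set_def)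
  qed
  thus "W \<in> TT k Z S" using W WZ assms(2) by (auto simp: TT_def)
qed

lemma TT_mono: "S0 \<subseteq> S \<Longrightarrow> TT k Z S0 \<subseteq> TT k Z S"
  unfolding TT_def restr_set_def by blast

lemma TT_insert:
  assumes "z \<notin> Z'" and "\<forall>v\<in>{1..k}. W \<in> TT k Z' ((\<lambda>x. restrict x Z') ` {x\<in>S. x z = v})"
    and "k \<ge> 1"
  shows "insert z W \<in> TT k (insert z Z') S"
proof -
  have WZ: "W \<subseteq> Z'" using assms(2,3) by (auto simp: TT_def)
  have "PiE (insert z W) (\<lambda>_. {1..k}) \<subseteq> restr_set S (insert z W)"
  proof
    fix q assume q: "q \<in> PiE (insert z W) (\<lambda>_. {1..k})"
    define v where "v = q z"
    have v: "v \<in> {1..k}" using q by (auto simp: v_def PiE_iff)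
    have qW: "restrict q W \<in> PiE W (\<lambda>_. {1..k})" using q by (auto simp: PiE_iff)
    have "W \<in> TT k Z' ((\<lambda>x. restrict x Z') ` {x\<in>S. x z = v})" using assms(2) v by blast
    hence "restrict q W \<in> restr_set ((\<lambda>x. restrict x Z') ` {x\<in>S. x z = v}) W"
      using qW unfolding TT_def by blast
    then obtain x where x: "x \<in> S" "x z = v" "restrict q W = restrict (restrict x Z') W"
      by (auto simp: restr_set_def)
    have "q = restrict x (insert z W)"
    proof
      fix u show "q u = restrict x (insert z W) u"
      proof (cases "u = z")
        case True thus ?thesis using x v_def by simp
      next
        case False
        show ?thesis
        proof (cases "u \<in> W")
          case True
          hence "restrict q W u = restrict (restrict x Z') W u" using x by simp
          thus ?thesis using True WZ by auto
        next
          case F2: False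
          thus ?thesis using False q by (auto simp: PiE_iff extensional_def)
        qed
      qed
    qed
    thus "q \<in> restr_set S (insert z W)" using x by (auto simp: restr_set_def)
  qed
  thus ?thesis using WZ by (auto simp: TT_def)
qed

lemma sum_bool_card: "finite A \<Longrightarrow> (\<Sum>x\<in>A. (of_bool (P x)::nat)) = card {x\<in>A. P x}"
proof -
  assume A: "finite A"
  have "card {x\<in>A. P x} = (\<Sum>x\<in>{x\<in>A. P x}. (1::nat))" by simp
  also have "\<dots> = (\<Sum>x\<in>A. if P x then 1 else 0)" by (rule sum.inter_filter[OF A])
  also have "\<dots> = (\<Sum>x\<in>A. (of_bool (P x)::nat))" by (rule sum.cong) auto
  finally show ?thesis by simp
qed

lemma sum_card_le:
  assumes U: "finite U" and V: "finite V" and TU: "\<forall>v\<in>V. T v \<subseteq> U"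
  shows "(\<Sum>v\<in>V. card (T v)) \<le> (card V - 1) * card U + card {W\<in>U. \<forall>v\<in>V. W \<in> T v}"
proof -
  have c: "card (T v) = (\<Sum>W\<in>U. of_bool (W \<in> T v))" if "v \<in> V" for v
  proof -
    have "T v = U \<inter> {W. W \<in> T v}" using TU that by auto
    thus ?thesis using U by (simp add: sum_of_bool_eq)
  qed
  have "(\<Sum>v\<in>V. card (T v)) = (\<Sum>v\<in>V. \<Sum>W\<in>U. of_bool (W \<in> T v))"
    using c by (rule sum.cong[OF refl])
  also have "\<dots> = (\<Sum>W\<in>U. \<Sum>v\<in>V. of_bool (W \<in> T v))" by (rule sum.swap)
  also have "\<dots> = (\<Sum>W\<in>U. card {v\<in>V. W \<in> T v})"
  proof (rule sum.cong[OF refl])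
    fix W assume "W \<in> U"
    have "V \<inter> {v. W \<in> T v} = {v\<in>V. W \<in> T v}" by blast
    thus "(\<Sum>v\<in>V. of_bool (W \<in> T v)) = card {v\<in>V. W \<in> T v}"
      using sum_bool_card[OF V, of "\<lambda>v. W \<in> T v"] by simp
  qed
  also have "\<dots> \<le> (\<Sum>W\<in>U. (card V - 1) + of_bool (\<forall>v\<in>V. W \<in> T v))"
  proof (rule sum_mono)
    fix W assume "W \<in> U"
    show "card {v\<in>V. W \<in> T v} \<le> (card V - 1) + of_bool (\<forall>v\<in>V. W \<in> T v)"
    proof (cases "\<forall>v\<in>V. W \<in> T v")
      case True
      have "card {v\<in>V. W \<in> T v} \<le> card V" using V by (intro card_mono) auto
      thus ?thesis using True by simp
    next
      case False
      then obtain v0 where v0: "v0 \<in> V" "W \<notin> T v0" by blast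
      have "{v\<in>V. W \<in> T v} \<subseteq> V - {v0}" using v0 by auto
      hence "card {v\<in>V. W \<in> T v} \<le> card (V - {v0})" using V by (intro card_mono) auto
      also have "\<dots> = card V - 1" using v0 V by simp
      finally show ?thesis by simp
    qed
  qed
  also have "\<dots> = (card V - 1) * card U + card {W\<in>U. \<forall>v\<in>V. W \<in> T v}"
  proof -
    have "U \<inter> {W. \<forall>v\<in>V. W \<in> T v} = {W\<in>U. \<forall>v\<in>V. W \<in> T v}" by blast
    thus ?thesis using sum_bool_card[OF U, of "\<lambda>W. \<forall>v\<in>V. W \<in> T v"]
      by (simp add: sum.distrib)
  qed
  finally show ?thesis .
qed

lemma upd_PiE: "i \<in> PiE Z' (\<lambda>_. B) \<Longrightarrow> w \<in> B \<Longrightarrow> i(z:=w) \<in> PiE (insert z Z') (\<lambda>_. B)"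
  unfolding PiE_iff extensional_def by auto

lemma main_cover:
  fixes k \<gamma> :: nat
  assumes k: "k \<ge> 2"
  shows "finite Z \<Longrightarrow> S \<subseteq> cube k Z \<Longrightarrow> \<exists>I. I \<subseteq> PiE Z (\<lambda>_. {1..k}) \<and> finite I \<and> covers Z I S \<and>
     real (card I) \<le> real (card (TT k Z S)) ^ \<gamma> * (1 + ((real k - 1) / real k) ^ \<gamma>) ^ card Z"
proof (induction Z arbitrary: S rule: finite_induct)
  case empty
  show ?case
  proof (cases "S = {}")
    case True
    show ?thesis by (rule exI[of _ "{}"]) (auto simp: covers_def True)
  next
    case False
    have r: "restrict x {} = (\<lambda>_. undefined)" for x :: "nat \<Rightarrow> nat" by (auto simp: restrict_def)
    have "restr_set S {} = {\<lambda>_. undefined}" using False by (auto simp: restr_set_def r)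
    hence "TT k {} S = {{}}" by (auto simp: TT_def)
    thus ?thesis
      by (intro exI[of _ "{\<lambda>_. undefined}"]) (auto simp: covers_def)
  qed
next
  case (insert z Z' S)
  define \<theta> where "\<theta> = (real k - 1) / real k"
  define q where "q = 1 + \<theta> ^ \<gamma>"
  have \<theta>0: "0 \<le> \<theta>" using k unfolding \<theta>_def by simp
  define A where "A = (\<lambda>v. (\<lambda>x. restrict x Z') ` {x\<in>S. x z = v})"
  define B where "B = (\<lambda>v. (\<lambda>x. restrict x Z') ` {x\<in>S. x z \<noteq> v})"
  define S' where "S' = (\<lambda>x. restrict x Z') ` S"
  have projcube: "(\<lambda>x. restrict x Z') ` S0 \<subseteq> cube k Z'" if "S0 \<subseteq> S" for S0
    using insert.prems that by (auto simp: cube_def PiE_iff)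
  define t where "t = card (TT k (insert z Z') S)"
  define Inter where "Inter = {W \<in> TT k Z' S'. \<forall>v\<in>{1..k}. W \<in> TT k Z' (A v)}"
  have TA_sub: "\<forall>v\<in>{1..k}. TT k Z' (A v) \<subseteq> TT k Z' S'"
    unfolding A_def S'_def by (intro ballI TT_mono) auto
  have sumle: "(\<Sum>v\<in>{1..k}. card (TT k Z' (A v))) \<le> (card {1..k} - 1) * card (TT k Z' S') + card Inter"
    unfolding Inter_def by (rule sum_card_le[OF finite_TT[OF insert.hyps(1)] _ TA_sub]) simp
  have disj: "TT k Z' S' \<inter> insert z ` Inter = {}"
    using insert.hyps(2) by (auto simp: TT_def)
  have usub: "TT k Z' S' \<union> insert z ` Inter \<subseteq> TT k (insert z Z') S"
  proof -
    have "TT k Z' S' \<subseteq> TT k (insert z Z') S" unfolding S'_def by (rule TT_proj_mono) auto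
    moreover have "insert z ` Inter \<subseteq> TT k (insert z Z') S"
    proof
      fix W' assume "W' \<in> insert z ` Inter"
      then obtain W where W: "W \<in> Inter" "W' = insert z W" by blast
      have "\<forall>v\<in>{1..k}. W \<in> TT k Z' ((\<lambda>x. restrict x Z') ` {x\<in>S. x z = v})"
        using W(1) by (simp add: Inter_def A_def)
      moreover have "(1::nat) \<le> k" using k by simp
      ultimately show "W' \<in> TT k (insert z Z') S" unfolding W(2)
        by (rule TT_insert[OF insert.hyps(2)])
    qed
    ultimately show ?thesis by blast
  qed
  have inj: "inj_on (insert z) Inter"
  proof (rule inj_onI)
    fix W1 W2 assume "W1 \<in> Inter" "W2 \<in> Inter" "insert z W1 = insert z W2"
    moreover have "z \<notin> W1" "z \<notin> W2" using calculation(1,2) insert.hyps(2) by (auto simp: Inter_def TT_def)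
    ultimately show "W1 = W2" by (metis insert_ident)
  qed
  have finI: "finite Inter" unfolding Inter_def using finite_TT[OF insert.hyps(1)] by simp
  have ct: "card (TT k Z' S') + card Inter \<le> t"
  proof -
    have "card (TT k Z' S') + card Inter = card (TT k Z' S' \<union> insert z ` Inter)"
      using disj inj finI finite_TT[OF insert.hyps(1)] by (simp add: card_Un_disjoint card_image)
    also have "\<dots> \<le> t" unfolding t_def
      by (rule card_mono[OF finite_TT usub]) (use insert.hyps(1) in simp)
    finally show ?thesis .
  qed
  define f where "f = (\<lambda>v. card (TT k Z' (A v)))"
  define m where "m = Min (f ` {1..k})"
  have "m \<in> f ` {1..k}" unfolding m_def using k by (intro Min_in) auto
  then obtain v where v: "v \<in> {1..k}" "f v = m" by auto
  have vmin: "f v \<le> f u" if "u \<in> {1..k}" for u using v that unfolding m_def by simp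
  have "k * f v = (\<Sum>u\<in>{1..k}. f v)" by simp
  also have "\<dots> \<le> (\<Sum>u\<in>{1..k}. f u)" by (rule sum_mono) (rule vmin)
  also have "\<dots> \<le> (k - 1) * card (TT k Z' S') + card Inter" using sumle unfolding f_def by simp
  also have "\<dots> \<le> (k - 1) * (card (TT k Z' S') + card Inter)"
  proof -
    have "1 \<le> k - 1" using k by arith
    hence "1 * card Inter \<le> (k - 1) * card Inter" by (rule mult_right_mono) simp
    hence "card Inter \<le> (k - 1) * card Inter" by simp
    thus ?thesis by (simp only: distrib_left)
  qed
  also have "\<dots> \<le> (k - 1) * t" using ct by simp
  finally have kf: "k * f v \<le> (k - 1) * t" .
  have fA: "real (f v) \<le> \<theta> * real t"
  proof -
    have "real (k * f v) \<le> real ((k - 1) * t)" using kf by (simp only: of_nat_le_iff)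
    hence "real k * real (f v) \<le> real (k - 1) * real t" by (simp only: of_nat_mult)
    moreover have "real (k - 1) = real k - 1" using k by (simp add: of_nat_diff)
    ultimately have "real k * real (f v) \<le> (real k - 1) * real t" by simp
    thus ?thesis using k unfolding \<theta>_def by (simp add: field_simps)
  qed
  have fB: "card (TT k Z' (B v)) \<le> t" unfolding t_def B_def
    by (rule card_mono[OF finite_TT TT_proj_mono]) (use insert.hyps(1) in auto)
  define w where "w = (if v = 1 then 2 else (1::nat))"
  have w: "w \<in> {1..k}" "w \<noteq> v" using k v by (auto simp: w_def)
  obtain IA where IA: "IA \<subseteq> PiE Z' (\<lambda>_. {1..k})" "finite IA" "covers Z' IA (A v)"
     "real (card IA) \<le> real (card (TT k Z' (A v))) ^ \<gamma> * q ^ card Z'"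
    using insert.IH[OF projcube[of "{x\<in>S. x z = v}"]] unfolding A_def q_def \<theta>_def by auto
  obtain IB where IB: "IB \<subseteq> PiE Z' (\<lambda>_. {1..k})" "finite IB" "covers Z' IB (B v)"
     "real (card IB) \<le> real (card (TT k Z' (B v))) ^ \<gamma> * q ^ card Z'"
    using insert.IH[OF projcube[of "{x\<in>S. x z \<noteq> v}"]] unfolding B_def q_def \<theta>_def by auto
  define I where "I = (\<lambda>i. i(z := w)) ` IA \<union> (\<lambda>i. i(z := v)) ` IB"
  have Isub: "I \<subseteq> PiE (insert z Z') (\<lambda>_. {1..k})"
  proof
    fix j assume "j \<in> I"
    then consider i where "i \<in> IA" "j = i(z := w)" | i where "i \<in> IB" "j = i(z := v)"
      unfolding I_def by blast
    thus "j \<in> PiE (insert z Z') (\<lambda>_. {1..k})"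
    proof cases
      case 1 thus ?thesis using IA(1) w(1) upd_PiE[of i Z' "{1..k}" w z] by auto
    next
      case 2 thus ?thesis using IB(1) v(1) upd_PiE[of i Z' "{1..k}" v z] by auto
    qed
  qed
  have Ifin: "finite I" using IA(2) IB(2) by (simp add: I_def)
  have Icov: "covers (insert z Z') I S"
    unfolding covers_def
  proof
    fix x assume x: "x \<in> S"
    show "\<exists>i\<in>I. \<forall>u\<in>insert z Z'. x u \<noteq> i u"
    proof (cases "x z = v")
      case True
      hence "restrict x Z' \<in> A v" using x by (auto simp: A_def)
      then obtain i where i: "i \<in> IA" "\<forall>u\<in>Z'. restrict x Z' u \<noteq> i u"
        using IA(3) by (auto simp: covers_def)
      have "i(z := w) \<in> I" using i(1) by (simp add: I_def)
      moreover have "\<forall>u\<in>insert z Z'. x u \<noteq> (i(z := w)) u" using i True w insert.hyps(2) by auto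
      ultimately show ?thesis by blast
    next
      case False
      hence "restrict x Z' \<in> B v" using x by (auto simp: B_def)
      then obtain i where i: "i \<in> IB" "\<forall>u\<in>Z'. restrict x Z' u \<noteq> i u"
        using IB(3) by (auto simp: covers_def)
      have "i(z := v) \<in> I" using i(1) by (simp add: I_def)
      moreover have "\<forall>u\<in>insert z Z'. x u \<noteq> (i(z := v)) u" using i False insert.hyps(2) by auto
      ultimately show ?thesis by blast
    qed
  qed
  have "card I \<le> card IA + card IB"
    unfolding I_def by (rule order_trans[OF card_Un_le add_mono[OF card_image_le card_image_le]]) (use IA IB in auto)
  hence "real (card I) \<le> real (card IA) + real (card IB)" by linarith
  also have "\<dots> \<le> real (f v) ^ \<gamma> * q ^ card Z' + real (card (TT k Z' (B v))) ^ \<gamma> * q ^ card Z'"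
    using IA(4) IB(4) unfolding f_def by linarith
  also have "\<dots> \<le> (\<theta> * real t) ^ \<gamma> * q ^ card Z' + real t ^ \<gamma> * q ^ card Z'"
  proof (intro add_mono mult_right_mono power_mono)
    show "real (f v) \<le> \<theta> * real t" by (rule fA)
    show "real (card (TT k Z' (B v))) \<le> real t" using fB by simp
  qed (use \<theta>0 in \<open>simp_all add: q_def\<close>)
  also have "\<dots> = real t ^ \<gamma> * q ^ card (insert z Z')"
  proof -
    have cZ: "card (insert z Z') = Suc (card Z')" using insert.hyps by simp
    show ?thesis unfolding cZ power_Suc power_mult_distrib q_def by (simp add: distrib_left distrib_right)
  qed
  finally have "real (card I) \<le> real t ^ \<gamma> * q ^ card (insert z Z')" .
  with Isub Ifin Icov show ?case unfolding t_def q_def \<theta>_def by (intro exI[of _ I]) simp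
qed

lemma F_le:
  assumes "I \<subseteq> PiE Z (\<lambda>_. {1..k})" "finite I" "covers Z I S" "S \<subseteq> cube k Z"
  shows "F_num k Z S \<le> card I"
proof -
  define V where "V = cover_set k Z ` I"
  have V1: "V \<subseteq> cover_U k Z" using assms(1) by (auto simp: V_def cover_U_def)
  have V2: "finite V" using assms(2) by (simp add: V_def)
  have V3: "S \<subseteq> \<Union>V"
  proof
    fix x assume x: "x \<in> S"
    then obtain i where i: "i \<in> I" "\<forall>z\<in>Z. x z \<noteq> i z" using assms(3) by (auto simp: covers_def)
    have "x \<in> cover_set k Z i" using x assms(4) i(2) by (auto simp: cover_set_def cube_def PiE_iff)
    thus "x \<in> \<Union>V" using i(1) by (auto simp: V_def)
  qed
  have "F_num k Z S \<le> card V" unfolding F_num_def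
    by (rule Least_le) (use V1 V2 V3 in blast)
  also have "\<dots> \<le> card I" unfolding V_def using assms(2) by (rule card_image_le)
  finally show ?thesis .
qed

lemma sum_Pow_power: "finite Z \<Longrightarrow> (\<Sum>W\<in>Pow Z. (y::real) ^ card W) = (1 + y) ^ card Z"
proof (induction rule: finite_induct)
  case empty thus ?case by simp
next
  case (insert a A)
  have disj: "Pow A \<inter> insert a ` Pow A = {}" using insert.hyps by auto
  have inj: "inj_on (insert a) (Pow A)" using insert.hyps by (auto simp: inj_on_def)
  have fin: "finite (Pow A)" using insert.hyps by simp
  have "(\<Sum>W\<in>insert a ` Pow A. y ^ card W) = (\<Sum>W\<in>Pow A. y ^ card (insert a W))"
    by (rule sum.reindex[OF inj, unfolded comp_def])
  also have "\<dots> = (\<Sum>W\<in>Pow A. y * y ^ card W)"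
  proof (rule sum.cong[OF refl])
    fix W assume "W \<in> Pow A"
    hence "finite W" "a \<notin> W" using insert.hyps finite_subset by auto
    thus "y ^ card (insert a W) = y * y ^ card W" by simp
  qed
  also have "\<dots> = y * (1 + y) ^ card A" by (simp only: sum_distrib_left[symmetric] insert.IH)
  finally have e: "(\<Sum>W\<in>insert a ` Pow A. y ^ card W) = y * (1 + y) ^ card A" .
  have "(\<Sum>W\<in>Pow (insert a A). y ^ card W) = (\<Sum>W\<in>Pow A. y ^ card W) + (\<Sum>W\<in>insert a ` Pow A. y ^ card W)"
    unfolding Pow_insert by (rule sum.union_disjoint) (use fin disj in auto)
  also have "\<dots> = (1 + y) ^ card (insert a A)" using e insert.IH insert.hyps by (simp add: algebra_simps)
  finally show ?case .
qed

lemma card_TT_bound: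
  assumes Z: "finite Z" and y: "0 < y" "y < 1"
    and small: "\<forall>W\<in>TT k Z S. real (card W) < c * real (card Z)"
  shows "real (card (TT k Z S)) \<le> (1 + y) ^ card Z * (1 / y) powr (c * real (card Z))"
proof -
  let ?T = "TT k Z S"
  have "real (card ?T) * y powr (c * real (card Z)) = (\<Sum>W\<in>?T. y powr (c * real (card Z)))" by simp
  also have "\<dots> \<le> (\<Sum>W\<in>?T. y ^ card W)"
  proof (rule sum_mono)
    fix W assume "W \<in> ?T"
    hence "real (card W) \<le> c * real (card Z)" using small by force
    hence "y powr (c * real (card Z)) \<le> y powr (real (card W))" using y by (intro powr_mono') auto
    thus "y powr (c * real (card Z)) \<le> y ^ card W" using y by (simp add: powr_realpow)
  qed
  also have "\<dots> \<le> (\<Sum>W\<in>Pow Z. y ^ card W)"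
    by (rule sum_mono2) (use Z y in \<open>auto simp: TT_def\<close>)
  also have "\<dots> = (1 + y) ^ card Z" using Z by (rule sum_Pow_power)
  finally have *: "real (card ?T) * y powr (c * real (card Z)) \<le> (1 + y) ^ card Z" .
  have pos: "0 < y powr (c * real (card Z))" using y by simp
  have e: "(1 / y) powr (c * real (card Z)) = 1 / y powr (c * real (card Z))"
    using y by (simp add: powr_divide)
  have "real (card ?T) \<le> (1 + y) ^ card Z / y powr (c * real (card Z))"
    using * pos by (simp add: pos_le_divide_eq)
  thus ?thesis unfolding e by simp
qed

lemma powr_swap: "0 < (Y::real) \<Longrightarrow> (Y powr (a * real n)) ^ m = (Y powr (a * real m)) ^ n"
proof -
  assume Y: "0 < Y"
  have "(Y powr (a * real n)) ^ m = (Y powr (a * real n)) powr real m" using Y by (simp add: powr_realpow)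
  also have "\<dots> = Y powr (a * real m * real n)" by (simp add: powr_powr mult_ac)
  also have "\<dots> = (Y powr (a * real m)) powr real n" by (simp add: powr_powr mult_ac)
  also have "\<dots> = (Y powr (a * real m)) ^ n" using Y by (simp add: powr_realpow)
  finally show ?thesis .
qed

theorem lemma3p3:
  fixes k :: nat and b :: real
  assumes "k \<ge> 2" and "b > 0"
  shows "\<exists>c::real. c > 0 \<and>
    (\<forall>(Z::nat set) S. finite Z \<longrightarrow> S \<subseteq> cube k Z \<longrightarrow>
       real (F_num k Z S) \<ge> real k powr (b * real (card Z)) \<longrightarrow>
       (\<exists>W. W \<subseteq> Z \<and> real (card W) \<ge> c * real (card Z) \<and>
            PiE W (\<lambda>_. {1..k}) \<subseteq> restr_set S W))"
proof -
  note k = assms(1)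
  define \<theta> where "\<theta> = (real k - 1) / real k"
  have \<theta>0: "0 \<le> \<theta>" using k by (simp add: \<theta>_def)
  have \<theta>1: "\<theta> < 1" using k by (simp add: \<theta>_def)
  define K where "K = real k powr b"
  have kpos: "0 < real k" using k by simp
  have K1: "1 < K"
  proof -
    have "real k powr 0 < real k powr b" using k assms(2) by (intro powr_less_mono) auto
    thus ?thesis using kpos by (simp add: K_def)
  qed
  define \<rho> where "\<rho> = K powr (1/3)"
  have \<rho>1: "1 < \<rho>"
  proof -
    have "K powr 0 < K powr (1/3)" using K1 by (intro powr_less_mono) auto
    thus ?thesis using K1 by (simp add: \<rho>_def)
  qed
  have \<rho>3: "\<rho> * \<rho> * \<rho> = K"
  proof -
    have "\<rho> * \<rho> * \<rho> = \<rho> ^ 3" by (simp add: power3_eq_cube)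
    also have "\<dots> = \<rho> powr (real 3)" using \<rho>1 by (simp add: powr_realpow)
    also have "\<dots> = K" using K1 by (simp add: \<rho>_def powr_powr)
    finally show ?thesis .
  qed
  obtain N where N: "\<theta> ^ N < \<rho> - 1" using real_arch_pow_inv[of "\<rho> - 1" \<theta>] \<rho>1 \<theta>1 by auto
  define \<gamma> where "\<gamma> = Suc N"
  have q\<rho>: "1 + \<theta> ^ \<gamma> < \<rho>"
  proof -
    have "\<theta> ^ \<gamma> \<le> \<theta> ^ N" unfolding \<gamma>_def using \<theta>0 \<theta>1
      by (simp add: mult_left_le_one_le)
    thus ?thesis using N by simp
  qed
  have "((\<lambda>y. (1 + y) ^ \<gamma>) \<longlongrightarrow> (1 + 0) ^ \<gamma>) (at_right (0::real))"
    by (intro tendsto_intros)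
  hence "eventually (\<lambda>y. (1 + y) ^ \<gamma> < \<rho>) (at_right (0::real))"
    using \<rho>1 by (intro order_tendstoD(2)) auto
  then obtain b0 :: real where b0: "b0 > 0" "\<forall>y>0. y < b0 \<longrightarrow> (1 + y) ^ \<gamma> < \<rho>"
    unfolding eventually_at_right_field by auto
  define y where "y = min (b0 / 2) (1 / 2)"
  have y0: "0 < y" and y1: "y < 1" using b0 by (auto simp: y_def)
  have y\<rho>: "(1 + y) ^ \<gamma> < \<rho>" using b0 y0 by (auto simp: y_def)
  define c where "c = ln \<rho> / (real \<gamma> * ln (1 / y))"
  have lny: "0 < ln (1 / y)" using y0 y1 by simp
  have c0: "0 < c" unfolding c_def using \<rho>1 lny by (simp add: \<gamma>_def)
  have Yc: "(1 / y) powr (c * real \<gamma>) = \<rho>"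
  proof -
    have "c * real \<gamma> * ln (1 / y) = ln \<rho>" unfolding c_def using lny by (simp add: \<gamma>_def)
    thus ?thesis using y0 \<rho>1 by (simp add: powr_def)
  qed
  show ?thesis
  proof (intro exI[of _ c] conjI allI impI)
    show "0 < c" by (rule c0)
    fix Z :: "nat set" and S
    assume Z: "finite Z" and S: "S \<subseteq> cube k Z"
      and F: "real k powr (b * real (card Z)) \<le> real (F_num k Z S)"
    show "\<exists>W. W \<subseteq> Z \<and> real (card W) \<ge> c * real (card Z) \<and> PiE W (\<lambda>_. {1..k}) \<subseteq> restr_set S W"
    proof (rule ccontr)
      assume no: "\<not> ?thesis"
      have small: "\<forall>W\<in>TT k Z S. real (card W) < c * real (card Z)"
        using no by (auto simp: TT_def not_le[symmetric])
      obtain I where I: "I \<subseteq> PiE Z (\<lambda>_. {1..k})" "finite I" "covers Z I S"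
        "real (card I) \<le> real (card (TT k Z S)) ^ \<gamma> * (1 + \<theta> ^ \<gamma>) ^ card Z"
        using main_cover[OF k Z S, of \<gamma>] unfolding \<theta>_def by blast
      have FI: "real (F_num k Z S) \<le> real (card I)" using F_le[OF I(1-3) S] by simp
      show False
      proof (cases "card Z = 0")
        case True
        have "TT k Z S = {}" using small True by auto
        hence "real (card I) \<le> 0" using I(4) by (simp add: \<gamma>_def)
        moreover have "real k powr (b * real (card Z)) = 1" using True kpos by simp
        ultimately show False using F FI by simp
      next
        case False
        define n where "n = card Z"
        have n0: "0 < n" using False by (simp add: n_def)
        have T: "real (card (TT k Z S)) \<le> (1 + y) ^ n * (1 / y) powr (c * real n)"
          unfolding n_def by (rule card_TT_bound[OF Z y0 y1 small])
        have "real (card (TT k Z S)) ^ \<gamma> \<le> ((1 + y) ^ n * (1 / y) powr (c * real n)) ^ \<gamma>"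
          by (rule power_mono[OF T]) simp
        also have "\<dots> = ((1 + y) ^ \<gamma>) ^ n * ((1 / y) powr (c * real n)) ^ \<gamma>"
          by (simp add: power_mult_distrib power_mult[symmetric] mult.commute)
        also have "((1 / y) powr (c * real n)) ^ \<gamma> = ((1 / y) powr (c * real \<gamma>)) ^ n"
          using y0 by (intro powr_swap) simp
        also have "\<dots> = \<rho> ^ n" by (simp add: Yc)
        finally have T2: "real (card (TT k Z S)) ^ \<gamma> \<le> ((1 + y) ^ \<gamma>) ^ n * \<rho> ^ n" .
        define X where "X = (1 + y) ^ \<gamma> * \<rho> * (1 + \<theta> ^ \<gamma>)"
        have "real (card I) \<le> ((1 + y) ^ \<gamma>) ^ n * \<rho> ^ n * (1 + \<theta> ^ \<gamma>) ^ n"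
          using I(4) T2 unfolding n_def[symmetric]
          by (rule order_trans[OF _ mult_right_mono]) (use \<theta>0 in simp)
        also have "\<dots> = X ^ n" by (simp add: X_def power_mult_distrib)
        finally have IX: "real (card I) \<le> X ^ n" .
        have X0: "0 \<le> X" using y0 \<rho>1 \<theta>0 by (simp add: X_def)
        have XK: "X < K"
        proof -
          have "(1 + y) ^ \<gamma> * \<rho> < \<rho> * \<rho>" using y\<rho> \<rho>1 by simp
          hence "(1 + y) ^ \<gamma> * \<rho> * (1 + \<theta> ^ \<gamma>) < \<rho> * \<rho> * \<rho>"
            by (rule mult_strict_mono) (use q\<rho> \<rho>1 \<theta>0 in auto)
          thus ?thesis using \<rho>3 by (simp add: X_def)
        qed
        have "X ^ n < K ^ n" using XK X0 n0 by (intro power_strict_mono) auto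
        also have "K ^ n = real k powr (b * real n)"
        proof -
          have "real k powr (b * real n) = (real k powr b) powr real n" by (simp add: powr_powr)
          also have "\<dots> = K ^ n" using kpos by (simp add: K_def powr_realpow)
          finally show ?thesis by simp
        qed
        finally show False using F FI IX unfolding n_def by simp
      qed
    qed
  qed
qed

end
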